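(* Let $\Lambda$ be a row-finite $k$-graph with no sources and let $\alpha$ be an action of $\mathbb{Z}^l$ on $\Lambda$ by automorphisms. Then for $x\in\Lambda^\infty$ and $(p,m)\in\mathbb{N}^k\times\mathbb{N}^l$, the shift map on $(\Lambda\times_\alpha\mathbb{Z}^l)^\infty$ satisfies $\sigma^{(p,m)}(x,\infty)=(\alpha^\infty_{-m}(\sigma^p(x)),\infty)$. Moreover, $\sigma^p\circ\alpha^\infty_{-m}=\alpha^\infty_{-m}\circ\sigma^p$; in particular $\sigma^{(p,m)}(x,\infty)=(\sigma^p(\alpha^\infty_{-m}(x)),\infty)$.
   Context: A $k$-graph is a countable category $\Lambda$ with a functor $d:\Lambda\to\mathbb{N}^k$ with unique factorisation; vertices are degree-$0$ morphisms; row-finite: each $v\Lambda^n$ finite; no sources: each $v\Lambda^n$ nonempty. An automorphism is a bijective degree-preserving functor. $\Lambda\times_\alpha\mathbb{Z}^l$ is the $(k+l)$-graph with morphisms $\Lambda\times\mathbb{N}^l$, degree $(d(\lambda),m)$, $r(\lambda,m)=(r(\lambda),0)$, $s(\lambda,m)=(\alpha_{-m}(s(\lambda)),0)$, $(\mu,m)(\nu,n)=(\mu\alpha_m(\nu),m+n)$. For a $j$-graph $\Gamma$, $\Gamma^\infty$ is the set of degree-preserving functors $x:\Omega_j\to\Gamma$ ($\Omega_j=\{(a,b)\in\mathbb{N}^j\times\mathbb{N}^j:a\le b\}$, $r(a,b)=(a,a)$, $s(a,b)=(b,b)$, $(a,b)(b,c)=(a,c)$, $d(a,b)=b-a$); $\sigma^q(x)$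 is the infinite path with $\sigma^q(x)(0,n)=x(q,q+n)$. For an automorphism $\phi$ of $\Lambda$, $\phi^\infty(x)$ is the infinite path with $\phi^\infty(x)(0,n)=\phi(x(0,n))$. For $x\in\Lambda^\infty$, $(x,\infty)$ denotes the unique infinite path of $\Lambda\times_\alpha\mathbb{Z}^l$ with $(x,\infty)((0,0),(p,0))=(x(0,p),0)$ for all $p\in\mathbb{N}^k$. *)

theory Defs
  imports "HOL-Library.Countable_Set"
begin

text \<open>Elements of N^k are functions nat => nat vanishing from index k on;
 elements of Z^l are functions nat => int vanishing from index l on.
 The order on N^k is the pointwise order (le_fun).\<close>

definition NN :: "nat \<Rightarrow> (nat \<Rightarrow> nat) set" where
  "NN k = {n. \<forall>i\<ge>k. n i = 0}"

definition ZZ :: "nat \<Rightarrow> (nat \<Rightarrow> int) set" where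
  "ZZ l = {g. \<forall>i\<ge>l. g i = 0}"

definition vadd :: "(nat \<Rightarrow> nat) \<Rightarrow> (nat \<Rightarrow> nat) \<Rightarrow> nat \<Rightarrow> nat" where
  "vadd m n = (\<lambda>i. m i + n i)"

definition vsub :: "(nat \<Rightarrow> nat) \<Rightarrow> (nat \<Rightarrow> nat) \<Rightarrow> nat \<Rightarrow> nat" where
  "vsub m n = (\<lambda>i. m i - n i)"

text \<open>A category is given by its set of morphisms; objects are identified with
 identity morphisms; rng/src give the identity at range/source.\<close>

record 'm kgraph =
  Mor :: "'m set"
  rng :: "'m \<Rightarrow> 'm"
  src :: "'m \<Rightarrow> 'm"
  cmp :: "'m \<Rightarrow> 'm \<Rightarrow> 'm"
  deg :: "'m \<Rightarrow> nat \<Rightarrow> nat"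

definition is_kgraph :: "nat \<Rightarrow> 'm kgraph \<Rightarrow> bool" where
  "is_kgraph k G \<longleftrightarrow>
     countable (Mor G) \<and>
     (\<forall>\<eta>\<in>Mor G. rng G \<eta> \<in> Mor G \<and> src G \<eta> \<in> Mor G \<and>
        rng G (rng G \<eta>) = rng G \<eta> \<and> src G (rng G \<eta>) = rng G \<eta> \<and>
        rng G (src G \<eta>) = src G \<eta> \<and> src G (src G \<eta>) = src G \<eta> \<and>
        cmp G (rng G \<eta>) \<eta> = \<eta> \<and> cmp G \<eta> (src G \<eta>) = \<eta>) \<and>
     (\<forall>\<mu>\<in>Mor G. \<forall>\<nu>\<in>Mor G. src G \<mu> = rng G \<nu> \<longrightarrow>
        cmp G \<mu> \<nu> \<in> Mor G \<and> rng G (cmp G \<mu> \<nu>) = rng G \<mu> \<and> src G (cmp G \<mu> \<nu>) = src G \<nu>) \<and>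
     (\<forall>\<mu>\<in>Mor G. \<forall>\<nu>\<in>Mor G. \<forall>\<rho>\<in>Mor G. src G \<mu> = rng G \<nu> \<longrightarrow> src G \<nu> = rng G \<rho> \<longrightarrow>
        cmp G (cmp G \<mu> \<nu>) \<rho> = cmp G \<mu> (cmp G \<nu> \<rho>)) \<and>
     (\<forall>\<eta>\<in>Mor G. deg G \<eta> \<in> NN k) \<and>
     (\<forall>\<mu>\<in>Mor G. \<forall>\<nu>\<in>Mor G. src G \<mu> = rng G \<nu> \<longrightarrow>
        deg G (cmp G \<mu> \<nu>) = vadd (deg G \<mu>) (deg G \<nu>)) \<and>
     (\<forall>\<eta>\<in>Mor G. \<forall>m\<in>NN k. \<forall>n\<in>NN k. deg G \<eta> = vadd m n \<longrightarrow>
        (\<exists>!(\<mu>, \<nu>). \<mu> \<in> Mor G \<and> \<nu> \<in> Mor G \<and> src G \<mu> = rng G \<nu> \<and>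
            deg G \<mu> = m \<and> deg G \<nu> = n \<and> \<eta> = cmp G \<mu> \<nu>))"

definition vertices :: "'m kgraph \<Rightarrow> 'm set" where
  "vertices G = {v \<in> Mor G. deg G v = (\<lambda>_. 0)}"

definition row_finite :: "nat \<Rightarrow> 'm kgraph \<Rightarrow> bool" where
  "row_finite k G \<longleftrightarrow> (\<forall>v\<in>vertices G. \<forall>n\<in>NN k. finite {\<eta>\<in>Mor G. rng G \<eta> = v \<and> deg G \<eta> = n})"

definition no_sources :: "nat \<Rightarrow> 'm kgraph \<Rightarrow> bool" where
  "no_sources k G \<longleftrightarrow> (\<forall>v\<in>vertices G. \<forall>n\<in>NN k. {\<eta>\<in>Mor G. rng G \<eta> = v \<and> deg G \<eta> = n} \<noteq> {})"

definition is_automorphism :: "'m kgraph \<Rightarrow> ('m \<Rightarrow> 'm) \<Rightarrow> bool" where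
  "is_automorphism G \<phi> \<longleftrightarrow>
     bij_betw \<phi> (Mor G) (Mor G) \<and>
     (\<forall>\<eta>\<in>Mor G. deg G (\<phi> \<eta>) = deg G \<eta> \<and>
        rng G (\<phi> \<eta>) = \<phi> (rng G \<eta>) \<and> src G (\<phi> \<eta>) = \<phi> (src G \<eta>)) \<and>
     (\<forall>\<mu>\<in>Mor G. \<forall>\<nu>\<in>Mor G. src G \<mu> = rng G \<nu> \<longrightarrow> \<phi> (cmp G \<mu> \<nu>) = cmp G (\<phi> \<mu>) (\<phi> \<nu>))"

definition is_action :: "nat \<Rightarrow> 'm kgraph \<Rightarrow> ((nat \<Rightarrow> int) \<Rightarrow> 'm \<Rightarrow> 'm) \<Rightarrow> bool" where
  "is_action l G \<alpha> \<longleftrightarrow>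
     (\<forall>g\<in>ZZ l. is_automorphism G (\<alpha> g)) \<and>
     (\<forall>\<eta>\<in>Mor G. \<alpha> (\<lambda>_. 0) \<eta> = \<eta>) \<and>
     (\<forall>g\<in>ZZ l. \<forall>h\<in>ZZ l. \<forall>\<eta>\<in>Mor G. \<alpha> (\<lambda>i. g i + h i) \<eta> = \<alpha> g (\<alpha> h \<eta>))"

definition pos :: "(nat \<Rightarrow> nat) \<Rightarrow> nat \<Rightarrow> int" where
  "pos m = (\<lambda>i. int (m i))"
definition neg :: "(nat \<Rightarrow> nat) \<Rightarrow> nat \<Rightarrow> int" where
  "neg m = (\<lambda>i. - int (m i))"

definition join :: "nat \<Rightarrow> (nat \<Rightarrow> nat) \<Rightarrow> (nat \<Rightarrow> nat) \<Rightarrow> nat \<Rightarrow> nat" where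
  "join k p m = (\<lambda>i. if i < k then p i else m (i - k))"

definition skew :: "nat \<Rightarrow> nat \<Rightarrow> 'm kgraph \<Rightarrow> ((nat \<Rightarrow> int) \<Rightarrow> 'm \<Rightarrow> 'm)
                    \<Rightarrow> ('m \<times> (nat \<Rightarrow> nat)) kgraph" where
  "skew k l G \<alpha> =
    \<lparr> Mor = Mor G \<times> NN l,
      rng = (\<lambda>(\<eta>, m). (rng G \<eta>, (\<lambda>_. 0))),
      src = (\<lambda>(\<eta>, m). (\<alpha> (neg m) (src G \<eta>), (\<lambda>_. 0))),
      cmp = (\<lambda>(\<mu>, m) (\<nu>, n). (cmp G \<mu> (\<alpha> (pos m) \<nu>), vadd m n)),
      deg = (\<lambda>(\<eta>, m). join k (deg G \<eta>) m) \<rparr>"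

definition Omega :: "nat \<Rightarrow> ((nat \<Rightarrow> nat) \<times> (nat \<Rightarrow> nat)) set" where
  "Omega j = {(a, b). a \<in> NN j \<and> b \<in> NN j \<and> a \<le> b}"

text \<open>Degree-preserving functors Omega_j -> G; as usual in HOL, the function is
 fixed to be undefined outside Omega_j so that equality is equality of functors.\<close>
definition paths :: "nat \<Rightarrow> 'm kgraph \<Rightarrow> ((nat \<Rightarrow> nat) \<times> (nat \<Rightarrow> nat) \<Rightarrow> 'm) set" where
  "paths j G = {x.
     (\<forall>(a, b)\<in>Omega j. x (a, b) \<in> Mor G \<and> deg G (x (a, b)) = vsub b a \<and>
         rng G (x (a, b)) = x (a, a) \<and> src G (x (a, b)) = x (b, b)) \<and>
     (\<forall>a b c. (a, b) \<in> Omega j \<longrightarrow> (b, c) \<in> Omega j \<longrightarrow>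
         cmp G (x (a, b)) (x (b, c)) = x (a, c)) \<and>
     (\<forall>ab. ab \<notin> Omega j \<longrightarrow> x ab = undefined)}"

definition shift :: "nat \<Rightarrow> (nat \<Rightarrow> nat) \<Rightarrow> ((nat \<Rightarrow> nat) \<times> (nat \<Rightarrow> nat) \<Rightarrow> 'm)
                     \<Rightarrow> (nat \<Rightarrow> nat) \<times> (nat \<Rightarrow> nat) \<Rightarrow> 'm" where
  "shift j q x = (\<lambda>(a, b). if (a, b) \<in> Omega j then x (vadd q a, vadd q b) else undefined)"

definition path_map :: "nat \<Rightarrow> ('m \<Rightarrow> 'm) \<Rightarrow> ((nat \<Rightarrow> nat) \<times> (nat \<Rightarrow> nat) \<Rightarrow> 'm)
                     \<Rightarrow> (nat \<Rightarrow> nat) \<times> (nat \<Rightarrow> nat) \<Rightarrow> 'm" where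
  "path_map j \<phi> x = (\<lambda>(a, b). if (a, b) \<in> Omega j then \<phi> (x (a, b)) else undefined)"

definition xinf :: "nat \<Rightarrow> nat \<Rightarrow> 'm kgraph \<Rightarrow> ((nat \<Rightarrow> int) \<Rightarrow> 'm \<Rightarrow> 'm)
    \<Rightarrow> ((nat \<Rightarrow> nat) \<times> (nat \<Rightarrow> nat) \<Rightarrow> 'm)
    \<Rightarrow> (nat \<Rightarrow> nat) \<times> (nat \<Rightarrow> nat) \<Rightarrow> 'm \<times> (nat \<Rightarrow> nat)" where
  "xinf k l G \<alpha> x = (THE y. y \<in> paths (k + l) (skew k l G \<alpha>) \<and>
      (\<forall>p\<in>NN k. y (\<lambda>_. 0, join k p (\<lambda>_. 0)) = (x (\<lambda>_. 0, p), (\<lambda>_. 0))))"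

end

theory Submission
  imports Defs
begin

definition fstp :: "nat \<Rightarrow> (nat \<Rightarrow> nat) \<Rightarrow> nat \<Rightarrow> nat" where
  "fstp k a = (\<lambda>i. if i < k then a i else 0)"
definition sndp :: "nat \<Rightarrow> (nat \<Rightarrow> nat) \<Rightarrow> nat \<Rightarrow> nat" where
  "sndp k a = (\<lambda>i. a (i + k))"

definition ymk :: "nat \<Rightarrow> nat \<Rightarrow> ((nat \<Rightarrow> int) \<Rightarrow> 'm \<Rightarrow> 'm)
    \<Rightarrow> ((nat \<Rightarrow> nat) \<times> (nat \<Rightarrow> nat) \<Rightarrow> 'm)
    \<Rightarrow> (nat \<Rightarrow> nat) \<times> (nat \<Rightarrow> nat) \<Rightarrow> 'm \<times> (nat \<Rightarrow> nat)" where
  "ymk k l \<alpha> x = (\<lambda>(a,b). if (a,b) \<in> Omega (k+l) then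
      (\<alpha> (neg (sndp k a)) (x (fstp k a, fstp k b)), vsub (sndp k b) (sndp k a)) else undefined)"

lemma Omega_iff: "(a,b) \<in> Omega j \<longleftrightarrow> a \<in> NN j \<and> b \<in> NN j \<and> (\<forall>i. a i \<le> b i)"
  by (auto simp: Omega_def le_fun_def)

lemma fstp_NN: "fstp k a \<in> NN k" by (simp add: fstp_def NN_def)
lemma sndp_NN: "a \<in> NN (k+l) \<Longrightarrow> sndp k a \<in> NN l" by (simp add: sndp_def NN_def)
lemma Omega_fstp: "(a,b) \<in> Omega (k+l) \<Longrightarrow> (fstp k a, fstp k b) \<in> Omega k"
  by (auto simp: Omega_iff NN_def fstp_def)
lemma Omega_sndp_le: "(a,b) \<in> Omega (k+l) \<Longrightarrow> sndp k a i \<le> sndp k b i"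
  by (auto simp: Omega_iff sndp_def)
lemma neg_ZZ: "m \<in> NN l \<Longrightarrow> neg m \<in> ZZ l" by (simp add: neg_def NN_def ZZ_def)
lemma pos_ZZ: "m \<in> NN l \<Longrightarrow> pos m \<in> ZZ l" by (simp add: pos_def NN_def ZZ_def)
lemma vsub_NN: "a \<in> NN l \<Longrightarrow> b \<in> NN l \<Longrightarrow> vsub b a \<in> NN l" by (simp add: vsub_def NN_def)
lemma neg0[simp]: "neg (\<lambda>_. 0) = (\<lambda>_. 0)" by (simp add: neg_def)
lemma pos0[simp]: "pos (\<lambda>_. 0) = (\<lambda>_. 0)" by (simp add: pos_def)
lemma zero_NN[simp]: "(\<lambda>_. 0) \<in> NN k" by (simp add: NN_def)

lemma skew_simps[simp]:
  "Mor (skew k l G \<alpha>) = Mor G \<times> NN l"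
  "rng (skew k l G \<alpha>) (\<eta>, n) = (rng G \<eta>, (\<lambda>_. 0))"
  "src (skew k l G \<alpha>) (\<eta>, n) = (\<alpha> (neg n) (src G \<eta>), (\<lambda>_. 0))"
  "cmp (skew k l G \<alpha>) (\<mu>, m) (\<nu>, n) = (cmp G \<mu> (\<alpha> (pos m) \<nu>), vadd m n)"
  "deg (skew k l G \<alpha>) (\<eta>, n) = join k (deg G \<eta>) n"
  by (simp_all add: skew_def)

lemma act_aut: "is_action l G \<alpha> \<Longrightarrow> g \<in> ZZ l \<Longrightarrow> is_automorphism G (\<alpha> g)"
  by (simp add: is_action_def)
lemma act_Mor: "is_action l G \<alpha> \<Longrightarrow> g \<in> ZZ l \<Longrightarrow> \<eta> \<in> Mor G \<Longrightarrow> \<alpha> g \<eta> \<in> Mor G"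
  using act_aut unfolding is_automorphism_def by (metis bij_betw_apply)
lemma act_deg: "is_action l G \<alpha> \<Longrightarrow> g \<in> ZZ l \<Longrightarrow> \<eta> \<in> Mor G \<Longrightarrow> deg G (\<alpha> g \<eta>) = deg G \<eta>"
  using act_aut unfolding is_automorphism_def by blast
lemma act_rng: "is_action l G \<alpha> \<Longrightarrow> g \<in> ZZ l \<Longrightarrow> \<eta> \<in> Mor G \<Longrightarrow> rng G (\<alpha> g \<eta>) = \<alpha> g (rng G \<eta>)"
  using act_aut unfolding is_automorphism_def by blast
lemma act_src: "is_action l G \<alpha> \<Longrightarrow> g \<in> ZZ l \<Longrightarrow> \<eta> \<in> Mor G \<Longrightarrow> src G (\<alpha> g \<eta>) = \<alpha> g (src G \<eta>)"
  using act_aut unfolding is_automorphism_def by blast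
lemma act_cmp: "is_action l G \<alpha> \<Longrightarrow> g \<in> ZZ l \<Longrightarrow> \<mu> \<in> Mor G \<Longrightarrow> \<nu> \<in> Mor G \<Longrightarrow> src G \<mu> = rng G \<nu>
   \<Longrightarrow> cmp G (\<alpha> g \<mu>) (\<alpha> g \<nu>) = \<alpha> g (cmp G \<mu> \<nu>)"
  using act_aut unfolding is_automorphism_def by metis
lemma act_0: "is_action l G \<alpha> \<Longrightarrow> \<eta> \<in> Mor G \<Longrightarrow> \<alpha> (\<lambda>_. 0) \<eta> = \<eta>"
  by (simp add: is_action_def)
lemma act_add: "is_action l G \<alpha> \<Longrightarrow> g \<in> ZZ l \<Longrightarrow> h \<in> ZZ l \<Longrightarrow> \<eta> \<in> Mor G
   \<Longrightarrow> \<alpha> g (\<alpha> h \<eta>) = \<alpha> (\<lambda>i. g i + h i) \<eta>"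
  by (simp add: is_action_def)

lemma kg_ufact:
  assumes kg: "is_kgraph k G" and "\<mu> \<in> Mor G" "\<nu> \<in> Mor G" "\<mu>' \<in> Mor G" "\<nu>' \<in> Mor G"
    and "src G \<mu> = rng G \<nu>" "src G \<mu>' = rng G \<nu>'" "deg G \<mu> = deg G \<mu>'" "deg G \<nu> = deg G \<nu>'"
    and "cmp G \<mu> \<nu> = cmp G \<mu>' \<nu>'"
  shows "\<mu> = \<mu>' \<and> \<nu> = \<nu>'"
proof -
  let ?\<eta> = "cmp G \<mu> \<nu>"
  have e: "?\<eta> \<in> Mor G" "deg G ?\<eta> = vadd (deg G \<mu>) (deg G \<nu>)"
    using kg assms unfolding is_kgraph_def by auto
  have n: "deg G \<mu> \<in> NN k" "deg G \<nu> \<in> NN k" using kg assms unfolding is_kgraph_def by auto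
  have "\<exists>!(a, b). a \<in> Mor G \<and> b \<in> Mor G \<and> src G a = rng G b \<and>
            deg G a = deg G \<mu> \<and> deg G b = deg G \<nu> \<and> ?\<eta> = cmp G a b"
  proof -
    have "\<forall>\<eta>\<in>Mor G. \<forall>m\<in>NN k. \<forall>n\<in>NN k. deg G \<eta> = vadd m n \<longrightarrow>
        (\<exists>!(\<mu>, \<nu>). \<mu> \<in> Mor G \<and> \<nu> \<in> Mor G \<and> src G \<mu> = rng G \<nu> \<and>
            deg G \<mu> = m \<and> deg G \<nu> = n \<and> \<eta> = cmp G \<mu> \<nu>)"
      using kg unfolding is_kgraph_def by (elim conjE)
    then show ?thesis using e n by blast
  qed
  then obtain z where u: "\<And>z'. (case z' of (a, b) \<Rightarrow> a \<in> Mor G \<and> b \<in> Mor G \<and> src G a = rng G b \<and>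
            deg G a = deg G \<mu> \<and> deg G b = deg G \<nu> \<and> ?\<eta> = cmp G a b) \<Longrightarrow> z' = z"
    by (metis (no_types, lifting) ex1E)
  have "(\<mu>, \<nu>) = z" by (rule u) (use assms in simp)
  moreover have "(\<mu>', \<nu>') = z" by (rule u) (use assms in simp)
  ultimately have "(\<mu>, \<nu>) = (\<mu>', \<nu>')" by simp
  then show ?thesis by simp
qed

lemma kg_vertex:
  assumes kg: "is_kgraph k G" and e: "\<eta> \<in> Mor G" and d: "deg G \<eta> = (\<lambda>_. 0)"
  shows "rng G \<eta> = \<eta>"
proof -
  have b: "rng G \<eta> \<in> Mor G" "src G \<eta> \<in> Mor G" "src G (rng G \<eta>) = rng G \<eta>"
     "rng G (src G \<eta>) = src G \<eta>" "cmp G (rng G \<eta>) \<eta> = \<eta>" "cmp G \<eta> (src G \<eta>) = \<eta>"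
    using kg e unfolding is_kgraph_def by auto
  have dc: "\<forall>\<mu>\<in>Mor G. \<forall>\<nu>\<in>Mor G. src G \<mu> = rng G \<nu> \<longrightarrow>
        deg G (cmp G \<mu> \<nu>) = vadd (deg G \<mu>) (deg G \<nu>)"
    using kg unfolding is_kgraph_def by (elim conjE)
  have "deg G (cmp G (rng G \<eta>) \<eta>) = vadd (deg G (rng G \<eta>)) (deg G \<eta>)"
    by (rule dc[rule_format, OF b(1) e b(3)])
  hence d1: "deg G (rng G \<eta>) = (\<lambda>_. 0)" using b d by (simp add: vadd_def)
  have "deg G (cmp G \<eta> (src G \<eta>)) = vadd (deg G \<eta>) (deg G (src G \<eta>))"
    by (rule dc[rule_format, OF e b(2) b(4)[symmetric]])
  hence d2: "deg G (src G \<eta>) = (\<lambda>_. 0)" using b d by (simp add: vadd_def)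
  show ?thesis
    using kg_ufact[OF kg b(1) e e b(2)] b d d1 d2 by simp
qed

lemma paths_D:
  assumes "x \<in> paths j G" "(a,b) \<in> Omega j"
  shows "x (a,b) \<in> Mor G \<and> deg G (x (a,b)) = vsub b a \<and> rng G (x (a,b)) = x (a,a) \<and> src G (x (a,b)) = x (b,b)"
  using assms unfolding paths_def by fastforce

lemma paths_cmp:
  "x \<in> paths j G \<Longrightarrow> (a,b) \<in> Omega j \<Longrightarrow> (b,c) \<in> Omega j \<Longrightarrow> cmp G (x (a,b)) (x (b,c)) = x (a,c)"
  unfolding paths_def by blast

lemma paths_undef: "x \<in> paths j G \<Longrightarrow> ab \<notin> Omega j \<Longrightarrow> x ab = undefined"
  unfolding paths_def by blast

lemma pathsI:
  assumes "\<And>a b. (a,b) \<in> Omega j \<Longrightarrow> x (a,b) \<in> Mor G \<and> deg G (x (a,b)) = vsub b a \<and> rng G (x (a,b)) = x (a,a) \<and> src G (x (a,b)) = x (b,b)"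
    and "\<And>a b c. (a,b) \<in> Omega j \<Longrightarrow> (b,c) \<in> Omega j \<Longrightarrow> cmp G (x (a,b)) (x (b,c)) = x (a,c)"
    and "\<And>ab. ab \<notin> Omega j \<Longrightarrow> x ab = undefined"
  shows "x \<in> paths j G"
  using assms unfolding paths_def by auto

lemma ymk_in:
  "(a,b) \<in> Omega (k+l) \<Longrightarrow> ymk k l \<alpha> x (a,b) =
     (\<alpha> (neg (sndp k a)) (x (fstp k a, fstp k b)), vsub (sndp k b) (sndp k a))"
  by (simp add: ymk_def)

lemma ymk_path:
  assumes kg: "is_kgraph k G" and act: "is_action l G \<alpha>" and x: "x \<in> paths k G"
  shows "ymk k l \<alpha> x \<in> paths (k+l) (skew k l G \<alpha>)"
proof (rule pathsI)
  fix a b assume ab: "(a,b) \<in> Omega (k+l)"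
  let ?y = "ymk k l \<alpha> x"
  have aa: "(a,a) \<in> Omega (k+l)" and bb: "(b,b) \<in> Omega(k+l)" using ab by (auto simp: Omega_iff)
  have o1: "(fstp k a, fstp k b) \<in> Omega k" using ab by (rule Omega_fstp)
  have a2: "sndp k a \<in> NN l" "sndp k b \<in> NN l" using ab by (auto simp: Omega_iff intro: sndp_NN)
  have le: "\<And>i. sndp k a i \<le> sndp k b i" using ab by (rule Omega_sndp_le)
  note xd = paths_D[OF x o1]
  have bbk: "(fstp k b, fstp k b) \<in> Omega k" using o1 by (auto simp: Omega_iff)
  have xbb: "x (fstp k b, fstp k b) \<in> Mor G" using paths_D[OF x bbk] by simp
  have aak: "(fstp k a, fstp k a) \<in> Omega k" using o1 by (auto simp: Omega_iff)
  have xaa: "x (fstp k a, fstp k a) \<in> Mor G" using paths_D[OF x aak] by simp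
  have g: "neg (sndp k a) \<in> ZZ l" "neg (sndp k b) \<in> ZZ l" "neg (vsub (sndp k b) (sndp k a)) \<in> ZZ l"
    using a2 by (auto intro: neg_ZZ vsub_NN)
  have nn: "(\<lambda>i. neg (vsub (sndp k b) (sndp k a)) i + neg (sndp k a) i) = neg (sndp k b)"
    using le by (auto simp: neg_def vsub_def fun_eq_iff of_nat_diff)
  show "?y (a,b) \<in> Mor (skew k l G \<alpha>) \<and> deg (skew k l G \<alpha>) (?y (a,b)) = vsub b a \<and>
       rng (skew k l G \<alpha>) (?y (a,b)) = ?y (a,a) \<and> src (skew k l G \<alpha>) (?y (a,b)) = ?y (b,b)"
    unfolding ymk_in[OF ab] ymk_in[OF aa] ymk_in[OF bb]
    using xd act_Mor[OF act g(1)] act_deg[OF act g(1)] act_rng[OF act g(1)] act_src[OF act g(1)]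
      vsub_NN[OF a2] act_add[OF act g(3) g(1) xbb] act_Mor[OF act g(1) xbb] nn
    by (auto simp: join_def vsub_def fstp_def sndp_def fun_eq_iff)
next
  fix a b c assume ab: "(a,b) \<in> Omega (k+l)" and bc: "(b,c) \<in> Omega (k+l)"
  have ac: "(a,c) \<in> Omega (k+l)" using ab bc by (auto simp: Omega_iff intro: order_trans)
  have o1: "(fstp k a, fstp k b) \<in> Omega k" using ab by (rule Omega_fstp)
  have o2: "(fstp k b, fstp k c) \<in> Omega k" using bc by (rule Omega_fstp)
  have a2: "sndp k a \<in> NN l" "sndp k b \<in> NN l" "sndp k c \<in> NN l"
    using ab bc by (auto simp: Omega_iff intro: sndp_NN)
  have le1: "\<And>i. sndp k a i \<le> sndp k b i" using ab by (rule Omega_sndp_le)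
  have le2: "\<And>i. sndp k b i \<le> sndp k c i" using bc by (rule Omega_sndp_le)
  have g: "neg (sndp k a) \<in> ZZ l" "neg (sndp k b) \<in> ZZ l" "pos (vsub (sndp k b) (sndp k a)) \<in> ZZ l"
    using a2 by (auto intro: neg_ZZ pos_ZZ vsub_NN)
  have pn: "(\<lambda>i. pos (vsub (sndp k b) (sndp k a)) i + neg (sndp k b) i) = neg (sndp k a)"
    using le1 by (auto simp: neg_def pos_def vsub_def fun_eq_iff of_nat_diff)
  have d1: "x (fstp k a, fstp k b) \<in> Mor G" "src G (x (fstp k a, fstp k b)) = x (fstp k b, fstp k b)"
    using paths_D[OF x o1] by auto
  have d2: "x (fstp k b, fstp k c) \<in> Mor G" "rng G (x (fstp k b, fstp k c)) = x (fstp k b, fstp k b)"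
    using paths_D[OF x o2] by auto
  have "\<alpha> (pos (vsub (sndp k b) (sndp k a))) (\<alpha> (neg (sndp k b)) (x (fstp k b, fstp k c)))
        = \<alpha> (neg (sndp k a)) (x (fstp k b, fstp k c))"
    using act_add[OF act g(3) g(2) d2(1)] pn by simp
  moreover have "cmp G (\<alpha> (neg (sndp k a)) (x (fstp k a, fstp k b))) (\<alpha> (neg (sndp k a)) (x (fstp k b, fstp k c)))
     = \<alpha> (neg (sndp k a)) (x (fstp k a, fstp k c))"
    using act_cmp[OF act g(1) d1(1) d2(1)] d1 d2 paths_cmp[OF x o1 o2] by simp
  moreover have "vadd (vsub (sndp k b) (sndp k a)) (vsub (sndp k c) (sndp k b)) = vsub (sndp k c) (sndp k a)"
    using le1 le2 by (auto simp: vadd_def vsub_def fun_eq_iff intro: le_add_diff_inverse)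
  ultimately show "cmp (skew k l G \<alpha>) (ymk k l \<alpha> x (a, b)) (ymk k l \<alpha> x (b, c)) = ymk k l \<alpha> x (a, c)"
    unfolding ymk_in[OF ab] ymk_in[OF bc] ymk_in[OF ac] by simp
next
  fix ab :: "(nat \<Rightarrow> nat) \<times> (nat \<Rightarrow> nat)" assume "ab \<notin> Omega (k+l)"
  then show "ymk k l \<alpha> x ab = undefined" by (cases ab) (simp add: ymk_def)
qed

lemma join_NN: "p \<in> NN k \<Longrightarrow> m \<in> NN l \<Longrightarrow> join k p m \<in> NN (k+l)"
  by (auto simp: join_def NN_def)

lemma fstp_join: "p \<in> NN k \<Longrightarrow> fstp k (join k p m) = p"
  by (auto simp: fstp_def join_def NN_def fun_eq_iff)
lemma sndp_join: "sndp k (join k p m) = m"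
  by (auto simp: sndp_def join_def fun_eq_iff)
lemma fstp0[simp]: "fstp k (\<lambda>_. 0) = (\<lambda>_. 0)" by (simp add: fstp_def)
lemma sndp0[simp]: "sndp k (\<lambda>_. 0) = (\<lambda>_. 0)" by (simp add: sndp_def)

lemma ymk_init:
  assumes act: "is_action l G \<alpha>" and x: "x \<in> paths k G" and p: "p \<in> NN k"
  shows "ymk k l \<alpha> x (\<lambda>_. 0, join k p (\<lambda>_. 0)) = (x (\<lambda>_. 0, p), \<lambda>_. 0)"
proof -
  have o: "(\<lambda>_. 0, join k p (\<lambda>_. 0)) \<in> Omega (k+l)"
    using join_NN[OF p zero_NN] by (simp add: Omega_iff)
  have o1: "((\<lambda>_. 0), p) \<in> Omega k" using p by (simp add: Omega_iff)
  show ?thesis unfolding ymk_in[OF o] fstp_join[OF p] sndp_join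
    using act_0[OF act] paths_D[OF x o1] by (simp add: vsub_def)
qed

lemma ymk_unique:
  assumes kg: "is_kgraph k G" and act: "is_action l G \<alpha>" and x: "x \<in> paths k G"
    and y: "y \<in> paths (k+l) (skew k l G \<alpha>)"
    and init: "\<forall>p\<in>NN k. y (\<lambda>_. 0, join k p (\<lambda>_. 0)) = (x (\<lambda>_. 0, p), \<lambda>_. 0)"
  shows "y = ymk k l \<alpha> x"
proof -
  have degNN: "\<forall>\<eta>\<in>Mor G. deg G \<eta> \<in> NN k" using kg unfolding is_kgraph_def by (elim conjE)
  have U1: "fst (y (a,b)) \<in> Mor G \<and> snd (y (a,b)) = vsub (sndp k b) (sndp k a) \<and>
      deg G (fst (y (a,b))) = vsub (fstp k b) (fstp k a)" if ab: "(a,b) \<in> Omega (k+l)" for a b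
  proof -
    obtain \<eta> n where yab: "y (a,b) = (\<eta>, n)" by fastforce
    have h: "\<eta> \<in> Mor G" "n \<in> NN l" "join k (deg G \<eta>) n = vsub b a"
      using paths_D[OF y ab] yab by auto
    have dn: "deg G \<eta> \<in> NN k" using degNN h(1) by blast
    have j: "\<And>i. join k (deg G \<eta>) n i = vsub b a i" using h(3) by simp
    have "n = vsub (sndp k b) (sndp k a)"
    proof
      fix i show "n i = vsub (sndp k b) (sndp k a) i" using j[of "i+k"] by (simp add: join_def vsub_def sndp_def)
    qed
    moreover have "deg G \<eta> = vsub (fstp k b) (fstp k a)"
    proof
      fix i show "deg G \<eta> i = vsub (fstp k b) (fstp k a) i"
      proof (cases "i < k")
        case True then show ?thesis using j[of i] by (simp add: join_def vsub_def fstp_def)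
      next
        case False then show ?thesis using dn by (simp add: NN_def vsub_def fstp_def)
      qed
    qed
    ultimately show ?thesis using yab h by simp
  qed
  have U2: "y (\<lambda>_. 0, b) = (x (\<lambda>_. 0, fstp k b), sndp k b)" if b: "b \<in> NN (k+l)" for b
  proof -
    define c where "c = join k (fstp k b) (\<lambda>_. 0)"
    have cN: "c \<in> NN (k+l)" unfolding c_def by (rule join_NN[OF fstp_NN zero_NN])
    have oc: "(\<lambda>_. 0, c) \<in> Omega (k+l)" using cN by (simp add: Omega_iff)
    have cb: "(c, b) \<in> Omega (k+l)" using cN b by (auto simp: Omega_iff c_def join_def fstp_def)
    have cc: "(c, c) \<in> Omega (k+l)" using cN by (simp add: Omega_iff)
    have ob: "(\<lambda>_. 0, b) \<in> Omega (k+l)" using b by (simp add: Omega_iff)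
    have fc: "fstp k c = fstp k b" unfolding c_def by (rule fstp_join[OF fstp_NN])
    have sc: "sndp k c = (\<lambda>_. 0)" unfolding c_def by (rule sndp_join)
    have y0c: "y (\<lambda>_. 0, c) = (x (\<lambda>_. 0, fstp k b), \<lambda>_. 0)" using init fstp_NN unfolding c_def by blast
    have o1: "((\<lambda>_. 0), fstp k b) \<in> Omega k" by (simp add: Omega_iff fstp_NN)
    have o2: "(fstp k b, fstp k b) \<in> Omega k" by (simp add: Omega_iff fstp_NN)
    have x1: "x (\<lambda>_. 0, fstp k b) \<in> Mor G" "src G (x (\<lambda>_. 0, fstp k b)) = x (fstp k b, fstp k b)"
      using paths_D[OF x o1] by auto
    have x2: "x (fstp k b, fstp k b) \<in> Mor G" using paths_D[OF x o2] by auto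
    obtain \<eta> where ycb: "y (c, b) = (\<eta>, sndp k b)" and e: "\<eta> \<in> Mor G" and de: "deg G \<eta> = (\<lambda>_. 0)"
      using U1[OF cb] fc sc by (cases "y (c,b)") (auto simp: vsub_def)
    have s1: "src (skew k l G \<alpha>) (y (\<lambda>_. 0, c)) = y (c,c)" and s2: "rng (skew k l G \<alpha>) (y (c, b)) = y (c,c)"
      using paths_D[OF y oc] paths_D[OF y cb] by auto
    have "src (skew k l G \<alpha>) (y (\<lambda>_. 0, c)) = (x (fstp k b, fstp k b), \<lambda>_. 0)"
      using y0c x1 act_0[OF act x2] by simp
    moreover have "rng (skew k l G \<alpha>) (y (c, b)) = (rng G \<eta>, \<lambda>_. 0)" using ycb by simp
    ultimately have "rng G \<eta> = x (fstp k b, fstp k b)" using s1 s2 by simp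
    hence eta: "\<eta> = x (fstp k b, fstp k b)" using kg_vertex[OF kg e de] by simp
    have "y (\<lambda>_. 0, b) = cmp (skew k l G \<alpha>) (y (\<lambda>_. 0, c)) (y (c, b))"
      using paths_cmp[OF y oc cb] by simp
    also have "\<dots> = (cmp G (x (\<lambda>_. 0, fstp k b)) \<eta>, sndp k b)"
      using y0c ycb act_0[OF act e] by (simp add: vadd_def)
    also have "\<dots> = (x (\<lambda>_. 0, fstp k b), sndp k b)"
      using paths_cmp[OF x o1 o2] eta by simp
    finally show ?thesis .
  qed
  show ?thesis
  proof
    fix ab :: "(nat \<Rightarrow> nat) \<times> (nat \<Rightarrow> nat)"
    obtain a b where abd: "ab = (a,b)" by fastforce
    show "y ab = ymk k l \<alpha> x ab"
    proof (cases "(a,b) \<in> Omega (k+l)")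
      case False then show ?thesis using paths_undef[OF y] abd by (simp add: ymk_def)
    next
      case ab: True
      have aN: "a \<in> NN (k+l)" and bN: "b \<in> NN (k+l)" using ab by (auto simp: Omega_iff)
      have oa: "(\<lambda>_. 0, a) \<in> Omega (k+l)" using aN by (simp add: Omega_iff)
      have aa: "(a, a) \<in> Omega (k+l)" using aN by (simp add: Omega_iff)
      have o1: "(fstp k a, fstp k b) \<in> Omega k" using ab by (rule Omega_fstp)
      have o0a: "((\<lambda>_. 0), fstp k a) \<in> Omega k" by (simp add: Omega_iff fstp_NN)
      have oaa: "(fstp k a, fstp k a) \<in> Omega k" by (simp add: Omega_iff fstp_NN)
      have sa: "sndp k a \<in> NN l" using aN by (rule sndp_NN)
      have g: "neg (sndp k a) \<in> ZZ l" "pos (sndp k a) \<in> ZZ l" using sa by (auto intro: neg_ZZ pos_ZZ)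
      have le: "\<And>i. sndp k a i \<le> sndp k b i" using ab by (rule Omega_sndp_le)
      obtain \<eta> where yab: "y (a, b) = (\<eta>, vsub (sndp k b) (sndp k a))" and e: "\<eta> \<in> Mor G"
        and de: "deg G \<eta> = vsub (fstp k b) (fstp k a)"
        using U1[OF ab] by (cases "y (a,b)") auto
      have y0a: "y (\<lambda>_. 0, a) = (x (\<lambda>_. 0, fstp k a), sndp k a)" by (rule U2[OF aN])
      have y0b: "y (\<lambda>_. 0, b) = (x (\<lambda>_. 0, fstp k b), sndp k b)" by (rule U2[OF bN])
      have x0a: "x (\<lambda>_. 0, fstp k a) \<in> Mor G" "src G (x (\<lambda>_. 0, fstp k a)) = x (fstp k a, fstp k a)"
        using paths_D[OF x o0a] by auto
      have xaa: "x (fstp k a, fstp k a) \<in> Mor G" using paths_D[OF x oaa] by auto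
      have xab: "x (fstp k a, fstp k b) \<in> Mor G" "rng G (x (fstp k a, fstp k b)) = x (fstp k a, fstp k a)"
        "deg G (x (fstp k a, fstp k b)) = vsub (fstp k b) (fstp k a)"
        using paths_D[OF x o1] by auto
      have s1: "src (skew k l G \<alpha>) (y (\<lambda>_. 0, a)) = y (a,a)" and s2: "rng (skew k l G \<alpha>) (y (a, b)) = y (a,a)"
        using paths_D[OF y oa] paths_D[OF y ab] by auto
      have "src (skew k l G \<alpha>) (y (\<lambda>_. 0, a)) = (\<alpha> (neg (sndp k a)) (x (fstp k a, fstp k a)), \<lambda>_. 0)"
        using y0a x0a by simp
      moreover have "rng (skew k l G \<alpha>) (y (a, b)) = (rng G \<eta>, \<lambda>_. 0)" using yab by simp
      ultimately have r\<eta>: "rng G \<eta> = \<alpha> (neg (sndp k a)) (x (fstp k a, fstp k a))" using s1 s2 by simp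
      have pn: "(\<lambda>i. pos (sndp k a) i + neg (sndp k a) i) = (\<lambda>_. 0)" by (simp add: pos_def neg_def)
      have np: "(\<lambda>i. neg (sndp k a) i + pos (sndp k a) i) = (\<lambda>_. 0)" by (simp add: pos_def neg_def)
      have r2: "rng G (\<alpha> (pos (sndp k a)) \<eta>) = x (fstp k a, fstp k a)"
        using act_rng[OF act g(2) e] r\<eta> act_add[OF act g(2) g(1) xaa] pn act_0[OF act xaa] by simp
      have "y (\<lambda>_. 0, b) = cmp (skew k l G \<alpha>) (y (\<lambda>_. 0, a)) (y (a, b))"
        using paths_cmp[OF y oa ab] by simp
      hence c1: "cmp G (x (\<lambda>_. 0, fstp k a)) (\<alpha> (pos (sndp k a)) \<eta>) = x (\<lambda>_. 0, fstp k b)"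
        using y0a y0b yab by simp
      have c2: "cmp G (x (\<lambda>_. 0, fstp k a)) (x (fstp k a, fstp k b)) = x (\<lambda>_. 0, fstp k b)"
        by (rule paths_cmp[OF x o0a o1])
      have "\<alpha> (pos (sndp k a)) \<eta> = x (fstp k a, fstp k b)"
        using kg_ufact[OF kg x0a(1) act_Mor[OF act g(2) e] x0a(1) xab(1)] x0a(2) r2 xab
          act_deg[OF act g(2) e] de c1 c2 by simp
      hence "\<eta> = \<alpha> (neg (sndp k a)) (x (fstp k a, fstp k b))"
        using act_add[OF act g(1) g(2) e] np act_0[OF act e] by simp
      then show ?thesis using abd yab ab by (simp add: ymk_def)
    qed
  qed
qed

lemma xinf_eq:
  assumes kg: "is_kgraph k G" and act: "is_action l G \<alpha>" and x: "x \<in> paths k G"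
  shows "xinf k l G \<alpha> x = ymk k l \<alpha> x"
  unfolding xinf_def
proof (rule the_equality)
  show "ymk k l \<alpha> x \<in> paths (k + l) (skew k l G \<alpha>) \<and>
    (\<forall>p\<in>NN k. ymk k l \<alpha> x (\<lambda>_. 0, join k p (\<lambda>_. 0)) = (x (\<lambda>_. 0, p), \<lambda>_. 0))"
    using ymk_path[OF kg act x] ymk_init[OF act x] by blast
next
  fix y assume "y \<in> paths (k + l) (skew k l G \<alpha>) \<and>
    (\<forall>p\<in>NN k. y (\<lambda>_. 0, join k p (\<lambda>_. 0)) = (x (\<lambda>_. 0, p), \<lambda>_. 0))"
  then show "y = ymk k l \<alpha> x" using ymk_unique[OF kg act x] by blast
qed

lemma Omega_vadd: "(a,b) \<in> Omega j \<Longrightarrow> q \<in> NN j \<Longrightarrow> (vadd q a, vadd q b) \<in> Omega j"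
  by (auto simp: Omega_iff NN_def vadd_def)

lemma shift_in: "(a,b) \<in> Omega j \<Longrightarrow> shift j q x (a,b) = x (vadd q a, vadd q b)"
  by (simp add: shift_def)
lemma pmap_in: "(a,b) \<in> Omega j \<Longrightarrow> path_map j \<phi> x (a,b) = \<phi> (x (a, b))"
  by (simp add: path_map_def)

lemma shift_path:
  assumes x: "x \<in> paths j G" and q: "q \<in> NN j"
  shows "shift j q x \<in> paths j G"
proof (rule pathsI)
  fix a b assume ab: "(a,b) \<in> Omega j"
  have aa: "(a,a) \<in> Omega j" "(b,b) \<in> Omega j" using ab by (auto simp: Omega_iff)
  have "vsub (vadd q b) (vadd q a) = vsub b a" by (simp add: vsub_def vadd_def)
  then show "shift j q x (a,b) \<in> Mor G \<and> deg G (shift j q x (a,b)) = vsub b a \<and>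
     rng G (shift j q x (a,b)) = shift j q x (a,a) \<and> src G (shift j q x (a,b)) = shift j q x (b,b)"
    using paths_D[OF x Omega_vadd[OF ab q]] by (simp add: shift_in[OF ab] shift_in[OF aa(1)] shift_in[OF aa(2)])
next
  fix a b c assume ab: "(a,b) \<in> Omega j" and bc: "(b,c) \<in> Omega j"
  have ac: "(a,c) \<in> Omega j" using ab bc by (auto simp: Omega_iff intro: order_trans)
  show "cmp G (shift j q x (a,b)) (shift j q x (b,c)) = shift j q x (a,c)"
    using paths_cmp[OF x Omega_vadd[OF ab q] Omega_vadd[OF bc q]]
    by (simp add: shift_in[OF ab] shift_in[OF bc] shift_in[OF ac])
next
  fix ab :: "(nat \<Rightarrow> nat) \<times> (nat \<Rightarrow> nat)" assume "ab \<notin> Omega j"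
  then show "shift j q x ab = undefined" by (cases ab) (simp add: shift_def)
qed

lemma pmap_path:
  assumes x: "x \<in> paths j G" and phi: "is_automorphism G \<phi>"
  shows "path_map j \<phi> x \<in> paths j G"
proof (rule pathsI)
  fix a b assume ab: "(a,b) \<in> Omega j"
  have aa: "(a,a) \<in> Omega j" "(b,b) \<in> Omega j" using ab by (auto simp: Omega_iff)
  have m: "x (a,b) \<in> Mor G" using paths_D[OF x ab] by simp
  show "path_map j \<phi> x (a,b) \<in> Mor G \<and> deg G (path_map j \<phi> x (a,b)) = vsub b a \<and>
     rng G (path_map j \<phi> x (a,b)) = path_map j \<phi> x (a,a) \<and> src G (path_map j \<phi> x (a,b)) = path_map j \<phi> x (b,b)"
    using paths_D[OF x ab] phi m
    unfolding is_automorphism_def pmap_in[OF ab] pmap_in[OF aa(1)] pmap_in[OF aa(2)] by (auto intro: bij_betw_apply)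
next
  fix a b c assume ab: "(a,b) \<in> Omega j" and bc: "(b,c) \<in> Omega j"
  have ac: "(a,c) \<in> Omega j" using ab bc by (auto simp: Omega_iff intro: order_trans)
  have m: "x (a,b) \<in> Mor G" "x (b,c) \<in> Mor G" "src G (x (a,b)) = rng G (x (b,c))"
    using paths_D[OF x ab] paths_D[OF x bc] by auto
  show "cmp G (path_map j \<phi> x (a,b)) (path_map j \<phi> x (b,c)) = path_map j \<phi> x (a,c)"
    using paths_cmp[OF x ab bc] phi m
    unfolding is_automorphism_def pmap_in[OF ab] pmap_in[OF bc] pmap_in[OF ac] by metis
next
  fix ab :: "(nat \<Rightarrow> nat) \<times> (nat \<Rightarrow> nat)" assume "ab \<notin> Omega j"
  then show "path_map j \<phi> x ab = undefined" by (cases ab) (simp add: path_map_def)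
qed

lemma shift_pmap_comm:
  assumes q: "q \<in> NN j"
  shows "shift j q (path_map j \<phi> x) = path_map j \<phi> (shift j q x)"
proof
  fix ab :: "(nat \<Rightarrow> nat) \<times> (nat \<Rightarrow> nat)"
  obtain a b where ab: "ab = (a,b)" by fastforce
  show "shift j q (path_map j \<phi> x) ab = path_map j \<phi> (shift j q x) ab"
    using Omega_vadd[OF _ q, of a b] unfolding ab by (auto simp: shift_def path_map_def)
qed

lemma shift_ymk:
  assumes act: "is_action l G \<alpha>" and x: "x \<in> paths k G" and p: "p \<in> NN k" and m: "m \<in> NN l"
  shows "shift (k + l) (join k p m) (ymk k l \<alpha> x) = ymk k l \<alpha> (path_map k (\<alpha> (neg m)) (shift k p x))"
proof
  fix ab :: "(nat \<Rightarrow> nat) \<times> (nat \<Rightarrow> nat)"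
  obtain a b where abd: "ab = (a,b)" by fastforce
  show "shift (k + l) (join k p m) (ymk k l \<alpha> x) ab = ymk k l \<alpha> (path_map k (\<alpha> (neg m)) (shift k p x)) ab"
  proof (cases "(a,b) \<in> Omega (k+l)")
    case False then show ?thesis unfolding abd by (simp add: shift_def ymk_def)
  next
    case ab: True
    let ?q = "join k p m"
    have q: "?q \<in> NN (k+l)" by (rule join_NN[OF p m])
    have o: "(vadd ?q a, vadd ?q b) \<in> Omega (k+l)" by (rule Omega_vadd[OF ab q])
    have o1: "(fstp k a, fstp k b) \<in> Omega k" using ab by (rule Omega_fstp)
    have sa: "sndp k a \<in> NN l" using ab by (auto simp: Omega_iff intro: sndp_NN)
    have f: "fstp k (vadd ?q a) = vadd p (fstp k a)" "fstp k (vadd ?q b) = vadd p (fstp k b)"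
      using p by (auto simp: fstp_def vadd_def join_def NN_def fun_eq_iff)
    have s: "sndp k (vadd ?q a) = vadd m (sndp k a)" "sndp k (vadd ?q b) = vadd m (sndp k b)"
      by (auto simp: sndp_def vadd_def join_def fun_eq_iff)
    have xm: "x (vadd p (fstp k a), vadd p (fstp k b)) \<in> Mor G"
      using paths_D[OF x Omega_vadd[OF o1 p]] by simp
    have nn: "(\<lambda>i. neg (sndp k a) i + neg m i) = neg (vadd m (sndp k a))"
      by (auto simp: neg_def vadd_def fun_eq_iff)
    have vv: "vsub (vadd m (sndp k b)) (vadd m (sndp k a)) = vsub (sndp k b) (sndp k a)"
      by (simp add: vsub_def vadd_def)
    show ?thesis unfolding abd shift_in[OF ab] ymk_in[OF o] ymk_in[OF ab] f s pmap_in[OF o1] shift_in[OF o1]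
      using act_add[OF act neg_ZZ[OF sa] neg_ZZ[OF m] xm] nn vv by simp
  qed
qed

theorem lemma4p5:
  fixes G :: "'m kgraph" and \<alpha> :: "(nat \<Rightarrow> int) \<Rightarrow> 'm \<Rightarrow> 'm"
    and k l :: nat and x :: "(nat \<Rightarrow> nat) \<times> (nat \<Rightarrow> nat) \<Rightarrow> 'm"
    and p m :: "nat \<Rightarrow> nat"
  assumes "is_kgraph k G" and "row_finite k G" and "no_sources k G"
    and "is_action l G \<alpha>"
    and "x \<in> paths k G" and "p \<in> NN k" and "m \<in> NN l"
  shows "shift (k + l) (join k p m) (xinf k l G \<alpha> x)
           = xinf k l G \<alpha> (path_map k (\<alpha> (neg m)) (shift k p x)) \<and>
         shift k p (path_map k (\<alpha> (neg m)) x) = path_map k (\<alpha> (neg m)) (shift k p x) \<and>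
         shift (k + l) (join k p m) (xinf k l G \<alpha> x)
           = xinf k l G \<alpha> (shift k p (path_map k (\<alpha> (neg m)) x))"
proof -
  note kg = assms(1) and act = assms(4) and x = assms(5) and p = assms(6) and m = assms(7)
  have aut: "is_automorphism G (\<alpha> (neg m))" using act_aut[OF act neg_ZZ[OF m]] .
  have x': "path_map k (\<alpha> (neg m)) (shift k p x) \<in> paths k G"
    by (rule pmap_path[OF shift_path[OF x p] aut])
  have c: "shift k p (path_map k (\<alpha> (neg m)) x) = path_map k (\<alpha> (neg m)) (shift k p x)"
    by (rule shift_pmap_comm[OF p])
  have e: "shift (k + l) (join k p m) (xinf k l G \<alpha> x)
           = xinf k l G \<alpha> (path_map k (\<alpha> (neg m)) (shift k p x))"
    unfolding xinf_eq[OF kg act x] xinf_eq[OF kg act x'] by (rule shift_ymk[OF act x p m])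
  show ?thesis using c e by simp
qed

end
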